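(* Let $p$ be an odd prime, $d\ge2$ an integer with $p\nmid d$, and $\overline{\mathbb{F}_p}$ an algebraic closure of $\mathbb{F}_p$. Let $\zeta_1,\dots,\zeta_{\phi(d)}$ be the primitive $d$-th roots of unity in $\overline{\mathbb{F}_p}$, and let $C$ be the $\phi(d)\times d$ matrix whose $c$-th row is $(1,\zeta_c,\zeta_c^2,\dots,\zeta_c^{d-1})$. Let $\chi_1,\dots,\chi_n$ be Dirichlet characters of conductor $d$, with values in $K=\mathbb{Q}_p(\chi_1,\dots,\chi_n)$; let $\pi$ be a prime of the valuation ring $\mathcal{O}_K$, and regard each $\chi_i$, after reduction modulo $\pi$, as a function $\mathbb{Z}/d\mathbb{Z}\to\mathbb{F}_q=\mathcal{O}_K/\pi\subseteq\overline{\mathbb{F}_p}$ (with $\chi_i(h)=0$ when $\gcd(h,d)>1$). Assume the $\chi_i$ are pairwise distinct modulo $\pi$, i.e. for $i\ne i'$ there is $a\in(\mathbb{Z}/d\mathbb{Z})^*$ with $\chi_i(a)\not\equiv\chi_{i'}(a)\pmod{\pi}$. Let $E$ be the $d\times n$ matrix with entry $\chi_i(h)$ in row $h$ ($h=0,\dots,d-1$) and column $i$, and let $B=CE$. Then: 1. $C$ has rank $\phi(d)$; 2. the set $\{(1,\zeta,\dots,\zeta^{d-1}):\ \zeta\in\overline{\mathbb{F}_p},\ \zeta^d=1,\ \zeta\text{ not a primitive }d\text{-th root of unity}\}$ is a basis of $\ker(C)\subseteq\overline{\mathbb{F}_p}^{\,d}$; 3. $\ker(B)=\{(0,\dots,0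)\}$.
   Context: $\phi$ denotes Euler's totient function. Matrices act on column vectors over $\overline{\mathbb{F}_p}$. *)

theory Defs
  imports "Berlekamp_Zassenhaus.Finite_Field"
          "HOL-Algebra.Algebraic_Closure_Type"
          "Jordan_Normal_Form.Matrix_Kernel"
          "Jordan_Normal_Form.DL_Rank"
          "HOL-Number_Theory.Number_Theory"
begin

text \<open>Algebraic closure of F_p: the type 'p mod_ring is F_p (CARD('p) = p prime),
  and 'p mod_ring alg_closure is its algebraic closure.\<close>

definition prim_root_unity :: "nat \<Rightarrow> 'a :: comm_ring_1 \<Rightarrow> bool" where
  "prim_root_unity d z \<longleftrightarrow> z ^ d = 1 \<and> (\<forall>k. 0 < k \<and> k < d \<longrightarrow> z ^ k \<noteq> 1)"

text \<open>Dirichlet character modulo d (as a function on the naturals, i.e. on Z/dZ via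
  periodicity), with values in a commutative ring; vanishes off the units.\<close>
definition dirichlet_char :: "nat \<Rightarrow> (nat \<Rightarrow> 'a :: comm_ring_1) \<Rightarrow> bool" where
  "dirichlet_char d \<chi> \<longleftrightarrow>
     (\<forall>a. \<chi> (a + d) = \<chi> a) \<and> \<chi> 1 = 1 \<and> (\<forall>a b. \<chi> (a * b) = \<chi> a * \<chi> b) \<and>
     (\<forall>a. \<not> coprime a d \<longrightarrow> \<chi> a = 0)"

definition induced_mod :: "nat \<Rightarrow> nat \<Rightarrow> (nat \<Rightarrow> 'a :: comm_ring_1) \<Rightarrow> bool" where
  "induced_mod d e \<chi> \<longleftrightarrow> (\<forall>a. coprime a d \<longrightarrow> [a = 1] (mod e) \<longrightarrow> \<chi> a = 1)"

definition conductor :: "nat \<Rightarrow> (nat \<Rightarrow> 'a :: comm_ring_1) \<Rightarrow> nat" where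
  "conductor d \<chi> = (LEAST e. 0 < e \<and> e dvd d \<and> induced_mod d e \<chi>)"

end

theory Submission
  imports Defs
begin


definition ordx :: "'a::monoid_mult \<Rightarrow> nat \<Rightarrow> bool" where
  "ordx z n \<longleftrightarrow> (\<forall>j. z ^ j = 1 \<longleftrightarrow> n dvd j)"

lemma pow_gcd_one:
  fixes z :: "'a::comm_monoid_mult"
  assumes "z ^ a = 1" "z ^ b = 1" shows "z ^ gcd a b = 1"
proof (cases "a = 0")
  case True then show ?thesis using assms by simp
next
  case False
  then obtain x y where xy: "a * x = b * y + gcd a b" using bezout_nat by blast
  have "z ^ (a * x) = 1" using assms by (simp add: power_mult)
  moreover have "z ^ (a * x) = z ^ gcd a b" using assms xy
    by (simp add: power_add power_mult)
  ultimately show ?thesis by simp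
qed

lemma ordx_mult_coprime:
  fixes x y :: "'a::comm_monoid_mult"
  assumes x: "ordx x a" and y: "ordx y b" and cop: "coprime a b"
  shows "ordx (x * y) (a * b)"
  unfolding ordx_def
proof (intro allI iffI)
  fix j assume h: "(x * y) ^ j = 1"
  have xb: "x ^ b = 1 \<Longrightarrow> False" if "\<not> a dvd b" using x that unfolding ordx_def by blast
  have "(x*y)^(j*b) = 1" using h by (metis power_mult power_one)
  moreover have "y ^ (j*b) = 1" using y unfolding ordx_def by simp
  ultimately have "x ^ (j*b) = 1" by (simp add: power_mult_distrib)
  hence "a dvd j*b" using x unfolding ordx_def by blast
  hence a: "a dvd j" using cop by (metis coprime_dvd_mult_left_iff)
  have "(x*y)^(j*a) = 1" using h by (metis power_mult power_one)
  moreover have "x ^ (j*a) = 1" using x unfolding ordx_def by simp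
  ultimately have "y ^ (j*a) = 1" by (simp add: power_mult_distrib)
  hence "b dvd j*a" using y unfolding ordx_def by blast
  hence "b dvd j" using cop by (metis coprime_commute coprime_dvd_mult_left_iff)
  with a cop show "a * b dvd j" by (simp add: divides_mult)
next
  fix j assume "a * b dvd j"
  then obtain t where j: "j = a * b * t" by blast
  have "x ^ a = 1" "y ^ b = 1" using x y unfolding ordx_def by auto
  hence "x ^ j = 1" "y ^ j = 1" unfolding j
    by (metis mult.assoc power_mult power_one, metis mult.commute mult.left_commute power_mult power_one)
  thus "(x * y) ^ j = 1" by (simp add: power_mult_distrib)
qed

lemma exists_order_prime:
  fixes q :: nat
  assumes q: "Factorial_Ring.prime q" and q0: "(of_nat q :: 'a::alg_closed_field) \<noteq> 0"
  shows "\<exists>z::'a. ordx z q"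
proof -
  define f where "f = (\<lambda>k::nat. (1::'a))"
  have "\<exists>x::'a. (\<Sum>k\<le>q - 1. f k * x ^ k) = 0"
    by (rule alg_closed) (use q prime_gt_1_nat in \<open>auto simp: f_def\<close>)
  then obtain x :: 'a where x: "(\<Sum>k<q. x ^ k) = 0"
    using q prime_gt_0_nat by (auto simp: f_def lessThan_Suc_atMost[symmetric] )
  have "x \<noteq> 1" using x q0 by auto
  have "(x - 1) * (\<Sum>k<q. x ^ k) = x ^ q - 1"
    by (simp add: power_diff_1_eq)
  hence xq: "x ^ q = 1" using x by simp
  have "ordx x q" unfolding ordx_def
  proof (intro allI iffI)
    fix j assume "x ^ j = 1"
    hence "x ^ gcd j q = 1" using xq pow_gcd_one by blast
    moreover have "gcd j q = 1 \<or> gcd j q = q" using q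
      by (metis gcd_dvd2 prime_nat_iff)
    ultimately show "q dvd j" using \<open>x \<noteq> 1\<close> by (metis gcd_dvd1 power_one_right)
  next
    fix j assume "q dvd j" thus "x ^ j = 1" using xq by (metis dvdE power_mult power_one)
  qed
  thus ?thesis by blast
qed

lemma exists_prim_root:
  assumes "d > 0" and "(of_nat d :: 'a::alg_closed_field) \<noteq> 0"
  shows "\<exists>z::'a. ordx z d"
  using assms
proof (induction d rule: less_induct)
  case (less d)
  show ?case
  proof (cases "d = 1")
    case True
    then show ?thesis by (intro exI[of _ 1]) (auto simp: ordx_def)
  next
    case False
    then obtain q where q: "Factorial_Ring.prime q" "q dvd d" using prime_factor_nat by blast
    then obtain m where dm: "d = q * m" by blast
    have m0: "m > 0" using dm less.prems by auto
    have mlt: "m < d" using dm q prime_gt_1_nat m0 by auto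
    have ofm: "(of_nat m :: 'a) \<noteq> 0" "(of_nat q :: 'a) \<noteq> 0" using less.prems dm by auto
    obtain y :: 'a where y: "ordx y m" using less.IH[OF mlt m0 ofm(1)] by auto
    show ?thesis
    proof (cases "q dvd m")
      case False
      hence "coprime q m" using q by (simp add: prime_imp_coprime)
      moreover obtain x :: 'a where "ordx x q" using exists_order_prime q(1) ofm(2) by blast
      ultimately show ?thesis using ordx_mult_coprime y dm by blast
    next
      case True
      then obtain r where mr: "m = q * r" by blast
      have "\<exists>z::'a. z ^ q = y" using nth_root_exists[of q y] q prime_gt_0_nat by auto
      then obtain z :: 'a where zq: "z ^ q = y" by (elim exE)
      have "ordx z d" unfolding ordx_def
      proof (intro allI iffI)
        fix j assume zj: "z ^ j = 1"
        have "(z ^ q) ^ j = (z ^ j) ^ q" by (simp add: power_mult[symmetric] mult.commute)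
        hence "y ^ j = (z ^ j) ^ q" using zq by simp
        hence "y ^ j = 1" using zj by simp
        hence "m dvd j" using y unfolding ordx_def by blast
        then obtain t where jt: "j = m * t" by (elim dvdE)
        have zd: "z ^ (q * m) = 1" using zq y unfolding ordx_def by (simp add: power_mult)
        show "d dvd j"
        proof (rule ccontr)
          assume nd: "\<not> d dvd j"
          have "\<not> q dvd t" using nd jt dm by auto
          hence "coprime q t" using q by (simp add: prime_imp_coprime)
          have w1: "(z ^ m) ^ t = 1" using zj jt by (simp add: power_mult)
          have w2: "(z ^ m) ^ q = 1" using zd by (simp add: power_mult[symmetric] mult.commute)
          have "(z ^ m) ^ gcd t q = 1" using pow_gcd_one[OF w1 w2] .
          hence "z ^ m = 1" using \<open>coprime q t\<close> by (simp add: coprime_commute)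
          hence "y ^ r = 1" using zq mr by (simp add: power_mult)
          hence "m dvd r" using y unfolding ordx_def by blast
          moreover have "r > 0" using mr m0 by auto
          ultimately have "q * r \<le> r" using mr dvd_imp_le by blast
          moreover have "q > 1" using q prime_gt_1_nat by blast
          ultimately show False using \<open>r > 0\<close> by simp
        qed
      next
        fix j assume "d dvd j"
        then obtain t where "j = d * t" by blast
        moreover have "z ^ d = 1" using zq y dm unfolding ordx_def by (simp add: power_mult)
        ultimately show "z ^ j = 1" by (simp add: power_mult)
      qed
      thus ?thesis by blast
    qed
  qed
qed


lemma ordx_pow_one: "ordx z d \<Longrightarrow> z ^ d = 1"
  unfolding ordx_def by auto

lemma ordx_inj:
  fixes z :: "'a::field"
  assumes z: "ordx z d" and d: "d > 0"
  shows "inj_on (\<lambda>j. z ^ j) {..<d}"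
proof (rule inj_onI)
  have z0: "z \<noteq> 0" using ordx_pow_one[OF z] d by (auto simp: power_0_left)
  have key: "i = j" if "i < d" "j < d" "i \<le> j" "z ^ i = z ^ j" for i j
  proof -
    have "z ^ j = z ^ i * z ^ (j - i)" using that(3) by (simp add: power_add[symmetric])
    hence "z ^ (j - i) = 1" using that(4) z0 by simp
    hence "d dvd (j - i)" using z unfolding ordx_def by blast
    thus ?thesis using that by (metis diff_is_0_eq dvd_imp_le le_antisym less_imp_diff_less neq0_conv not_less)
  qed
  fix i j assume "i \<in> {..<d}" "j \<in> {..<d}" "z ^ i = z ^ j"
  thus "i = j" using key[of i j] key[of j i] by (cases "i \<le> j") auto
qed

lemma roots_bound:
  fixes d :: nat
  assumes d: "d > 0"
  shows "finite {w::'a::field. w ^ d = 1} \<and> card {w::'a::field. w ^ d = 1} \<le> d"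
proof -
  define p :: "'a poly" where "p = monom 1 d - 1"
  have ev: "poly p w = w ^ d - 1" for w by (simp add: p_def poly_monom)
  have "p \<noteq> 0"
  proof
    assume "p = 0"
    hence "poly p 0 = 0" by simp
    thus False using ev[of 0] d by (simp add: power_0_left)
  qed
  have deg: "Polynomial.degree p \<le> d" unfolding p_def
    by (rule order.trans[OF degree_diff_le_max]) (auto simp: degree_monom_le)
  have eq: "{w::'a. w ^ d = 1} = {w. poly p w = 0}" by (auto simp: ev)
  show ?thesis unfolding eq using card_poly_roots_bound[OF \<open>p \<noteq> 0\<close>] deg poly_roots_finite[OF \<open>p \<noteq> 0\<close>]
    by auto
qed

lemma roots_eq:
  fixes z :: "'a::field"
  assumes z: "ordx z d" and d: "d > 0"
  shows "{w::'a. w ^ d = 1} = (\<lambda>j. z ^ j) ` {..<d}"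
proof -
  have sub: "(\<lambda>j. z ^ j) ` {..<d} \<subseteq> {w::'a. w ^ d = 1}"
    using ordx_pow_one[OF z] by (auto simp: power_mult[symmetric] mult.commute[of _ d] power_mult)
  have c: "card ((\<lambda>j. z ^ j) ` {..<d}) = d" using card_image[OF ordx_inj[OF z d]] by simp
  have "finite {w::'a. w ^ d = 1}" "card {w::'a. w ^ d = 1} \<le> d" using roots_bound[OF d, where 'a='a] by auto
  hence "card ((\<lambda>j. z ^ j) ` {..<d}) = card {w::'a. w ^ d = 1}"
    using c card_mono[OF _ sub] by linarith
  thus ?thesis using card_subset_eq[OF _ sub] \<open>finite {w::'a. w ^ d = 1}\<close> by auto
qed

lemma ordx_pow_iff:
  fixes z :: "'a::field"
  assumes z: "ordx z d" and d: "d > 0"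
  shows "ordx (z ^ j) d \<longleftrightarrow> coprime j d"
proof
  assume cop: "coprime j d"
  show "ordx (z ^ j) d" unfolding ordx_def
  proof (intro allI)
    fix k
    have "(z ^ j) ^ k = z ^ (j * k)" by (simp add: power_mult)
    also have "\<dots> = 1 \<longleftrightarrow> d dvd j * k" using z unfolding ordx_def by blast
    also have "\<dots> \<longleftrightarrow> d dvd k" using cop by (simp add: coprime_commute coprime_dvd_mult_right_iff)
    finally show "(z ^ j) ^ k = 1 \<longleftrightarrow> d dvd k" by simp
  qed
next
  assume o: "ordx (z ^ j) d"
  show "coprime j d"
  proof (rule ccontr)
    assume nc: "\<not> coprime j d"
    define g where "g = gcd j d"
    have g1: "g > 1" using nc d unfolding g_def
      by (metis gcd_pos_nat coprime_iff_gcd_eq_1 less_one nat_neq_iff)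
    have gd: "g dvd d" "g dvd j" unfolding g_def by auto
    define k where "k = d div g"
    have "g \<le> d" using gd d dvd_imp_le by blast
    hence k0: "0 < k" "k < d" using g1 gd d unfolding k_def
      by (auto intro!: div_less_dividend simp: div_greater_zero_iff)
    have "d dvd j * k" using gd unfolding k_def
      by (metis dvd_div_mult_self dvd_mult_div_cancel dvd_triv_left mult.commute mult_dvd_mono dvd_refl dvdE)
    hence "z ^ (j * k) = 1" using z unfolding ordx_def by blast
    hence "(z ^ j) ^ k = 1" by (simp add: power_mult)
    hence "d dvd k" using o unfolding ordx_def by blast
    thus False using k0 by (simp add: nat_dvd_not_less)
  qed
qed

lemma prim_iff_ordx:
  fixes w :: "'a::field"
  assumes d: "d > 0"
  shows "prim_root_unity d w \<longleftrightarrow> ordx w d"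
proof
  assume p: "prim_root_unity d w"
  show "ordx w d" unfolding ordx_def
  proof (intro allI iffI)
    fix j assume wj: "w ^ j = 1"
    have wd: "w ^ d = 1" using p unfolding prim_root_unity_def by blast
    have g: "w ^ gcd j d = 1" using pow_gcd_one[OF wj wd] .
    have "gcd j d > 0" using d by simp
    moreover have "gcd j d \<le> d" using d by (simp add: gcd_le2_nat)
    ultimately have "gcd j d = d" using p g unfolding prim_root_unity_def by (meson le_neq_implies_less)
    thus "d dvd j" by (metis gcd_dvd1)
  next
    fix j assume "d dvd j"
    then obtain t where "j = d * t" by blast
    thus "w ^ j = 1" using p unfolding prim_root_unity_def by (simp add: power_mult)
  qed
next
  assume o: "ordx w d"
  show "prim_root_unity d w" unfolding prim_root_unity_def
    using o unfolding ordx_def by (auto simp: nat_dvd_not_less)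
qed

lemma orth:
  fixes w :: "'a::field"
  assumes "w ^ d = 1"
  shows "(\<Sum>h<d. w ^ h) = (if w = 1 then of_nat d else 0)"
proof (cases "w = 1")
  case False
  have "(w - 1) * (\<Sum>h<d. w ^ h) = 0" using assms by (simp add: power_diff_1_eq[symmetric])
  thus ?thesis using False by simp
qed simp


lemma char_add_mult:
  assumes "dirichlet_char d \<chi>" shows "\<chi> (x + d * k) = \<chi> x"
proof (induction k)
  case (Suc k)
  have "\<chi> (x + d * Suc k) = \<chi> ((x + d * k) + d)" by (simp add: algebra_simps)
  also have "\<dots> = \<chi> (x + d * k)" using assms unfolding dirichlet_char_def by blast
  finally show ?case using Suc by simp
qed simp

lemma char_mod:
  assumes "dirichlet_char d \<chi>" shows "\<chi> (x mod d) = \<chi> x"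
  using char_add_mult[OF assms, of "x mod d" "x div d"] by simp

lemma char_mult:
  assumes "dirichlet_char d \<chi>" shows "\<chi> (x * y) = \<chi> x * \<chi> y"
  using assms unfolding dirichlet_char_def by blast

lemma char_one:
  assumes "dirichlet_char d \<chi>" shows "\<chi> 1 = 1"
  using assms unfolding dirichlet_char_def by blast

lemma char_noncop:
  assumes "dirichlet_char d \<chi>" "\<not> coprime x d" shows "\<chi> x = 0"
  using assms unfolding dirichlet_char_def by blast

lemma mult_mod_inj:
  fixes a d :: nat
  assumes "coprime a d" shows "inj_on (\<lambda>h. a * h mod d) {..<d}"
proof (rule inj_onI)
  fix h h' assume "h \<in> {..<d}" "h' \<in> {..<d}" "a * h mod d = a * h' mod d"
  hence "[a * h = a * h'] (mod d)" "h < d" "h' < d" by (auto simp: cong_def)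
  hence "[h = h'] (mod d)" using cong_mult_lcancel_nat[OF assms] by blast
  thus "h = h'" using \<open>h < d\<close> \<open>h' < d\<close> cong_less_modulus_unique_nat by blast
qed

lemma bij_sub:
  assumes "finite S" "inj_on f S" "f ` S \<subseteq> S" shows "bij_betw f S S"
  using assms endo_inj_surj unfolding bij_betw_def by blast

lemma coeff_vanish:
  fixes \<chi> :: "nat \<Rightarrow> 'o::idom"
  assumes ch: "dirichlet_char d \<chi>" and cd: "conductor d \<chi> = d" and d: "d \<ge> 2"
    and nb: "\<not> coprime b d"
  shows "(\<Sum>h\<in>{h. h < d \<and> b * h mod d = k}. \<chi> h) = 0"
proof -
  define g where "g = gcd b d"
  have g1: "g > 1" using nb d unfolding g_def
    by (metis gcd_pos_nat coprime_iff_gcd_eq_1 less_one nat_neq_iff not_numeral_le_zero)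
  have gd: "g dvd d" "g dvd b" unfolding g_def by auto
  define e where "e = d div g"
  have "g \<le> d" using gd d dvd_imp_le by auto
  hence e0: "0 < e" "e < d" using g1 gd d unfolding e_def
    by (auto intro!: div_less_dividend simp: div_greater_zero_iff)
  have ed: "e dvd d" unfolding e_def using gd by (metis dvd_div_mult_self dvd_triv_left)
  have dge: "d = g * e" unfolding e_def using gd by simp
  have "\<not> induced_mod d e \<chi>"
  proof
    assume "induced_mod d e \<chi>"
    hence "conductor d \<chi> \<le> e" unfolding conductor_def using e0 ed by (intro Least_le) auto
    thus False using cd e0 by simp
  qed
  then obtain a where a: "coprime a d" "[a = 1] (mod e)" "\<chi> a \<noteq> 1"
    unfolding induced_mod_def by blast
  have a1: "a \<ge> 1" using a(1) d by (cases a) auto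
  have "e dvd a - 1" using cong_to_1_nat[OF a(2)] .
  then obtain t where t: "a - 1 = e * t" by blast
  obtain b' where b': "b = g * b'" using gd by blast
  have "b * a = b + d * (b' * t)" using t a1 dge b'
    by (metis add_diff_inverse_nat less_one not_le mult.assoc mult.left_commute distrib_left mult.commute mult_1)
  hence ba: "b * a mod d = b mod d" by simp
  define S where "S = {h. h < d \<and> b * h mod d = k}"
  define \<sigma> where "\<sigma> = (\<lambda>h. a * h mod d)"
  have sig: "b * \<sigma> h mod d = b * h mod d" for h
  proof -
    have "b * \<sigma> h mod d = b * (a * h) mod d" unfolding \<sigma>_def by (simp add: mod_mult_right_eq)
    also have "\<dots> = (b * a) * h mod d" by (simp add: mult.assoc)
    also have "\<dots> = (b * a mod d) * h mod d" by (simp add: mod_mult_left_eq)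
    also have "\<dots> = b * h mod d" using ba by (simp add: mod_mult_left_eq)
    finally show ?thesis .
  qed
  have d0: "d > 0" using d by simp
  have "S \<subseteq> {..<d}" unfolding S_def by auto
  hence inj: "inj_on \<sigma> S" using mult_mod_inj[OF a(1)] unfolding \<sigma>_def by (rule inj_on_subset[rotated])
  have img: "\<sigma> ` S \<subseteq> S" unfolding S_def using sig d0 by (auto simp: \<sigma>_def)
  have bij: "bij_betw \<sigma> S S" by (rule bij_sub) (use inj img in \<open>auto simp: S_def\<close>)
  have "(\<Sum>h\<in>S. \<chi> h) = (\<Sum>h\<in>S. \<chi> (\<sigma> h))" using sum.reindex_bij_betw[OF bij, of \<chi>] by simp
  also have "\<dots> = (\<Sum>h\<in>S. \<chi> a * \<chi> h)"
    by (rule sum.cong) (auto simp: \<sigma>_def char_mod[OF ch] char_mult[OF ch])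
  also have "\<dots> = \<chi> a * (\<Sum>h\<in>S. \<chi> h)" by (simp add: sum_distrib_left)
  finally have "(1 - \<chi> a) * (\<Sum>h\<in>S. \<chi> h) = 0" by (simp add: algebra_simps)
  thus ?thesis using a(3) unfolding S_def by simp
qed


lemma red_zero:
  fixes red :: "'o::comm_ring_1 \<Rightarrow> 'f::field"
  assumes red_add: "\<And>x y. red (x + y) = red x + red y"
  shows "red 0 = 0"
proof -
  have "red 0 + red 0 = red 0 + 0" using red_add[of 0 0] by simp
  thus ?thesis by (rule add_left_imp_eq)
qed

lemma red_sum:
  fixes red :: "'o::comm_ring_1 \<Rightarrow> 'f::field"
  assumes red_add: "\<And>x y. red (x + y) = red x + red y"
  shows "red (sum f A) = (\<Sum>x\<in>A. red (f x))"
proof (induction A rule: infinite_finite_induct)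
  case (infinite A) then show ?case using red_zero[OF red_add] by simp
next
  case empty then show ?case using red_zero[OF red_add] by simp
next
  case (insert x F) then show ?case by (simp add: red_add)
qed

lemma pow_mod_eq:
  fixes z :: "'a::monoid_mult"
  assumes "z ^ d = 1" shows "z ^ n = z ^ (n mod d)"
proof -
  have "z ^ n = z ^ (d * (n div d) + n mod d)" by (simp only: mult_div_mod_eq)
  also have "\<dots> = (z ^ d) ^ (n div d) * z ^ (n mod d)" by (simp only: power_add power_mult)
  also have "\<dots> = z ^ (n mod d)" using assms by simp
  finally show ?thesis .
qed

lemma gauss_noncop:
  fixes \<chi> :: "nat \<Rightarrow> 'o::idom" and red :: "'o \<Rightarrow> 'f::field"
  assumes ch: "dirichlet_char d \<chi>" and cd: "conductor d \<chi> = d" and d: "d \<ge> 2"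
    and nb: "\<not> coprime b d" and z: "z ^ d = 1"
    and red_add: "\<And>x y. red (x + y) = red x + red y"
  shows "(\<Sum>h<d. red (\<chi> h) * z ^ (b * h)) = 0"
proof -
  have "(\<Sum>h<d. red (\<chi> h) * z ^ (b * h)) = (\<Sum>h<d. red (\<chi> h) * z ^ (b * h mod d))"
    by (intro sum.cong refl) (metis pow_mod_eq[OF z])
  also have "\<dots> = (\<Sum>k<d. (\<Sum>h\<in>{h. h \<in> {..<d} \<and> b * h mod d = k}. red (\<chi> h) * z ^ (b * h mod d)))"
    using d by (intro sum.group[symmetric]) auto
  also have "\<dots> = (\<Sum>k<d. z ^ k * red (\<Sum>h\<in>{h. h < d \<and> b * h mod d = k}. \<chi> h))"
    by (intro sum.cong refl) (auto simp: red_sum[OF red_add] sum_distrib_left mult.commute intro!: sum.cong)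
  also have "\<dots> = 0"
    using coeff_vanish[OF ch cd d nb] red_zero[OF red_add] by simp
  finally show ?thesis .
qed

lemma gauss_cop:
  fixes \<chi> :: "nat \<Rightarrow> 'o::idom" and red :: "'o \<Rightarrow> 'f::field"
  assumes ch: "dirichlet_char d \<chi>" and d: "d > 0"
    and ab: "[a * b = 1] (mod d)" and z: "z ^ d = 1"
    and red_mult: "\<And>x y. red (x * y) = red x * red y"
  shows "(\<Sum>h<d. red (\<chi> h) * z ^ (b * h)) = red (\<chi> a) * (\<Sum>h<d. red (\<chi> h) * z ^ h)"
proof -
  have ca: "coprime a d" using ab
    by (metis cong_imp_coprime cong_sym coprime_1_left coprime_mult_left_iff)
  define \<sigma> where "\<sigma> = (\<lambda>h. a * h mod d)"
  have bij: "bij_betw \<sigma> {..<d} {..<d}"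
    by (rule bij_sub) (use mult_mod_inj[OF ca] d in \<open>auto simp: \<sigma>_def\<close>)
  have e: "b * \<sigma> h mod d = h mod d" for h
  proof -
    have "b * \<sigma> h mod d = b * (a * h) mod d" unfolding \<sigma>_def by (simp add: mod_mult_right_eq)
    also have "\<dots> = (a * b) * h mod d" by (simp add: algebra_simps)
    also have "\<dots> = (a * b mod d) * h mod d" by (simp add: mod_mult_left_eq)
    also have "\<dots> = (1 mod d) * h mod d" using ab by (simp add: cong_def)
    also have "\<dots> = h mod d" by (simp add: mod_mult_left_eq)
    finally show ?thesis .
  qed
  have "(\<Sum>h<d. red (\<chi> h) * z ^ (b * h)) = (\<Sum>h<d. red (\<chi> (\<sigma> h)) * z ^ (b * \<sigma> h))"
    using sum.reindex_bij_betw[OF bij, of "\<lambda>h. red (\<chi> h) * z ^ (b * h)"] by simp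
  also have "\<dots> = (\<Sum>h<d. red (\<chi> a) * (red (\<chi> h) * z ^ h))"
  proof (intro sum.cong refl)
    fix h assume h: "h \<in> {..<d}"
    have "z ^ (b * \<sigma> h) = z ^ h" using pow_mod_eq[OF z, of "b * \<sigma> h"] pow_mod_eq[OF z, of h] e by simp
    moreover have "\<chi> (\<sigma> h) = \<chi> a * \<chi> h" unfolding \<sigma>_def by (simp add: char_mod[OF ch] char_mult[OF ch])
    ultimately show "red (\<chi> (\<sigma> h)) * z ^ (b * \<sigma> h) = red (\<chi> a) * (red (\<chi> h) * z ^ h)"
      by (simp add: red_mult)
  qed
  also have "\<dots> = red (\<chi> a) * (\<Sum>h<d. red (\<chi> h) * z ^ h)" by (simp add: sum_distrib_left)
  finally show ?thesis .
qed

lemma gauss_nonzero: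
  fixes \<chi> :: "nat \<Rightarrow> 'o::idom" and red :: "'o \<Rightarrow> 'f::field"
  assumes ch: "dirichlet_char d \<chi>" and cd: "conductor d \<chi> = d" and d: "d \<ge> 2"
    and z: "ordx z d" and dnz: "(of_nat d :: 'f) \<noteq> 0"
    and red_1: "red 1 = 1"
    and red_add: "\<And>x y. red (x + y) = red x + red y"
    and red_mult: "\<And>x y. red (x * y) = red x * red y"
  shows "(\<Sum>h<d. red (\<chi> h) * z ^ h) \<noteq> 0"
proof
  assume g0: "(\<Sum>h<d. red (\<chi> h) * z ^ h) = 0"
  have zd: "z ^ d = 1" using ordx_pow_one[OF z] .
  have S0: "(\<Sum>h<d. red (\<chi> h) * z ^ (b * h)) = 0" for b
  proof (cases "coprime b d")
    case True
    then obtain a where "[b * a = Suc 0] (mod d)" using cong_solve_coprime_nat by blast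
    hence "[a * b = 1] (mod d)" by (simp add: mult.commute)
    from gauss_cop[OF ch _ this zd red_mult] d g0 show ?thesis by simp
  next
    case False
    from gauss_noncop[OF ch cd d False zd red_add] show ?thesis .
  qed
  define T where "T = (\<Sum>b<d. (\<Sum>h<d. red (\<chi> h) * z ^ (b * h)) * z ^ (b * (d - 1)))"
  have "T = 0" unfolding T_def using S0 by simp
  have pw: "z ^ (b * h) * z ^ (b * (d - 1)) = (z ^ (h + (d - 1))) ^ b" for b h
  proof -
    have "z ^ (b * h) * z ^ (b * (d - 1)) = z ^ (b * h + b * (d - 1))" by (simp add: power_add)
    also have "b * h + b * (d - 1) = (h + (d - 1)) * b" by (simp add: algebra_simps)
    also have "z ^ \<dots> = (z ^ (h + (d - 1))) ^ b" by (simp add: power_mult)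
    finally show ?thesis .
  qed
  have "T = (\<Sum>b<d. \<Sum>h<d. red (\<chi> h) * (z ^ (h + (d - 1))) ^ b)"
    unfolding T_def sum_distrib_right
    by (intro sum.cong refl) (simp only: mult.assoc pw)
  also have "\<dots> = (\<Sum>h<d. red (\<chi> h) * (\<Sum>b<d. (z ^ (h + (d - 1))) ^ b))"
    by (subst sum.swap) (simp add: sum_distrib_left)
  also have "\<dots> = (\<Sum>h<d. if h = 1 then of_nat d else 0)"
  proof (intro sum.cong refl)
    fix h assume h: "h \<in> {..<d}"
    have "(z ^ (h + (d - 1))) ^ d = (z ^ d) ^ (h + (d - 1))"
      by (simp only: power_mult[symmetric] mult.commute)
    hence w: "(z ^ (h + (d - 1))) ^ d = 1" using zd by simp
    have "z ^ (h + (d - 1)) = 1 \<longleftrightarrow> d dvd h + (d - 1)" using z unfolding ordx_def by blast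
    also have "\<dots> \<longleftrightarrow> h = 1"
    proof
      assume dv: "d dvd h + (d - 1)"
      have "h + (d - 1) > 0" using d by simp
      hence "d \<le> h + (d - 1)" by (rule dvd_imp_le[OF dv])
      have dv2: "d dvd h + (d - 1) - d" using dvd_diff_nat[OF dv dvd_refl] .
      have "h < d" using h by simp
      hence "h + (d - 1) - d < d" by arith
      have "h + (d - 1) - d = 0"
      proof (rule ccontr)
        assume "h + (d - 1) - d \<noteq> 0"
        hence "d \<le> h + (d - 1) - d" using dv2 dvd_imp_le by blast
        thus False using \<open>h + (d - 1) - d < d\<close> by simp
      qed
      hence "h + (d - 1) = d" using \<open>d \<le> h + (d - 1)\<close> by simp
      thus "h = 1" using d by simp
    next
      assume "h = 1" thus "d dvd h + (d - 1)" using d by simp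
    qed
    finally have "z ^ (h + (d - 1)) = 1 \<longleftrightarrow> h = 1" .
    thus "red (\<chi> h) * (\<Sum>b<d. (z ^ (h + (d - 1))) ^ b) = (if h = 1 then of_nat d else 0)"
      using orth[OF w] char_one[OF ch] red_1 by auto
  qed
  also have "\<dots> = of_nat d" using d by (simp add: sum.delta)
  finally show False using \<open>T = 0\<close> dnz by simp
qed


lemma char_indep:
  fixes \<psi> :: "'i \<Rightarrow> nat \<Rightarrow> 'f::field"
  assumes fin: "finite I"
    and mult: "\<And>i x y. i \<in> I \<Longrightarrow> P x \<Longrightarrow> P y \<Longrightarrow> \<psi> i (x * y) = \<psi> i x * \<psi> i y"
    and one: "\<And>i. i \<in> I \<Longrightarrow> \<psi> i 1 = 1"
    and dist: "\<And>i j. i \<in> I \<Longrightarrow> j \<in> I \<Longrightarrow> i \<noteq> j \<Longrightarrow> \<exists>a. P a \<and> \<psi> i a \<noteq> \<psi> j a"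
    and Pm: "\<And>x y. P x \<Longrightarrow> P y \<Longrightarrow> P (x * y)" and P1: "P 1"
  shows "(\<forall>u. P u \<longrightarrow> (\<Sum>i\<in>I. y i * \<psi> i u) = 0) \<Longrightarrow> \<forall>i\<in>I. y i = 0"
  using fin mult one dist
proof (induction I arbitrary: y rule: finite_induct)
  case empty then show ?case by simp
next
  case (insert j J)
  have H: "y j * \<psi> j u + (\<Sum>i\<in>J. y i * \<psi> i u) = 0" if "P u" for u
    using insert.prems(1) that insert.hyps by simp
  have J0: "\<forall>i\<in>J. y i * (\<psi> i a - \<psi> j a) = 0" if Pa: "P a" for a
  proof -
    have "\<forall>i\<in>J. (\<lambda>i. y i * (\<psi> i a - \<psi> j a)) i = 0"
    proof (rule insert.IH)
      show "\<forall>u. P u \<longrightarrow> (\<Sum>i\<in>J. y i * (\<psi> i a - \<psi> j a) * \<psi> i u) = 0"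
      proof (intro allI impI)
        fix u assume Pu: "P u"
        have e1: "y j * \<psi> j (a * u) + (\<Sum>i\<in>J. y i * \<psi> i (a * u)) = 0" using H[OF Pm[OF Pa Pu]] .
        have e1': "y j * (\<psi> j a * \<psi> j u) + (\<Sum>i\<in>J. y i * (\<psi> i a * \<psi> i u)) = 0"
        proof -
          have "(\<Sum>i\<in>J. y i * \<psi> i (a * u)) = (\<Sum>i\<in>J. y i * (\<psi> i a * \<psi> i u))"
            using insert.prems(2) Pa Pu by (intro sum.cong) auto
          thus ?thesis using e1 insert.prems(2)[of j a u] Pa Pu by simp
        qed
        have e2: "\<psi> j a * (y j * \<psi> j u + (\<Sum>i\<in>J. y i * \<psi> i u)) = 0" using H[OF Pu] by simp
        have "(\<Sum>i\<in>J. y i * (\<psi> i a - \<psi> j a) * \<psi> i u)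
            = (y j * (\<psi> j a * \<psi> j u) + (\<Sum>i\<in>J. y i * (\<psi> i a * \<psi> i u)))
              - \<psi> j a * (y j * \<psi> j u + (\<Sum>i\<in>J. y i * \<psi> i u))"
          by (simp add: algebra_simps sum_distrib_left sum_subtractf)
        also have "\<dots> = 0" using e1' e2 by simp
        finally show "(\<Sum>i\<in>J. y i * (\<psi> i a - \<psi> j a) * \<psi> i u) = 0" .
      qed
    qed (use insert.prems in auto)
    thus ?thesis by simp
  qed
  have yJ: "\<forall>i\<in>J. y i = 0"
  proof
    fix i assume iJ: "i \<in> J"
    have "i \<noteq> j" using iJ insert.hyps by auto
    then obtain a where a: "P a" "\<psi> i a \<noteq> \<psi> j a" using insert.prems(4)[of i j] iJ by auto
    thus "y i = 0" using J0[OF a(1)] iJ by auto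
  qed
  have "y j * \<psi> j 1 = 0" using H[OF P1] yJ by simp
  hence "y j = 0" using insert.prems(3)[of j] by simp
  thus ?case using yJ by simp
qed

lemma ordx_inverse:
  fixes z u :: "'a::comm_monoid_mult"
  assumes "z * u = 1" "ordx u d" shows "ordx z d"
  unfolding ordx_def
proof
  fix j
  have "z ^ j * u ^ j = (z * u) ^ j" by (simp add: power_mult_distrib)
  hence "z ^ j * u ^ j = 1" using assms(1) by simp
  hence "z ^ j = 1 \<longleftrightarrow> u ^ j = 1" by auto
  thus "z ^ j = 1 \<longleftrightarrow> d dvd j" using assms(2) unfolding ordx_def by blast
qed

lemma root_inv:
  fixes u v :: "'a::field"
  assumes "v ^ d = 1" "d > 0"
  shows "v * v ^ (d - 1) = 1" "u * v ^ (d - 1) = 1 \<longleftrightarrow> u = v"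
proof -
  have "v * v ^ (d - 1) = v ^ Suc (d - 1)" by simp
  also have "Suc (d - 1) = d" using assms(2) by simp
  finally show vv: "v * v ^ (d - 1) = 1" using assms(1) by simp
  hence "v \<noteq> 0" by auto
  show "u * v ^ (d - 1) = 1 \<longleftrightarrow> u = v"
  proof
    assume h: "u * v ^ (d - 1) = 1"
    have "u = u * (v * v ^ (d - 1))" using vv by simp
    also have "\<dots> = (u * v ^ (d - 1)) * v" by (simp add: ac_simps)
    also have "\<dots> = v" using h by simp
    finally show "u = v" .
  qed (use vv in simp)
qed



type_synonym 'q FF = "'q mod_ring alg_closure"

theorem lemma4:
  fixes d n :: nat
    and zs :: "'p :: prime_card mod_ring alg_closure list"
    and \<chi> :: "nat \<Rightarrow> nat \<Rightarrow> 'o :: {idom, ring_char_0}"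
    and red :: "'o \<Rightarrow> 'p mod_ring alg_closure"
    and C E B :: "'p mod_ring alg_closure mat"
  assumes p_odd: "odd CARD('p)"
    and d_ge: "d \<ge> 2"
    and p_ndvd: "\<not> CARD('p) dvd d"
    and zs_distinct: "distinct zs"
    and zs_set: "set zs = {z. prim_root_unity d z}"
    and C_def: "C = mat (length zs) d (\<lambda>(c, h). (zs ! c) ^ h)"
    and chars: "\<And>i. i < n \<Longrightarrow> dirichlet_char d (\<chi> i)"
    and cond: "\<And>i. i < n \<Longrightarrow> conductor d (\<chi> i) = d"
    and red_1: "red 1 = 1"
    and red_add: "\<And>x y. red (x + y) = red x + red y"
    and red_mult: "\<And>x y. red (x * y) = red x * red y"
    and distinct_mod: "\<And>i i'. i < n \<Longrightarrow> i' < n \<Longrightarrow> i \<noteq> i' \<Longrightarrow>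
        \<exists>a<d. coprime a d \<and> red (\<chi> i a) \<noteq> red (\<chi> i' a)"
    and E_def: "E = mat d n (\<lambda>(h, i). red (\<chi> i h))"
    and B_def: "B = C * E"
  shows "vec_space.rank (length zs) C = totient d
    \<and> vectorspace.basis class_ring
           ((module_vec TYPE('p mod_ring alg_closure) d)\<lparr>carrier := mat_kernel C\<rparr>)
           {vec d (\<lambda>h. z ^ h) | z. z ^ d = 1 \<and> \<not> prim_root_unity d z}
    \<and> mat_kernel B = {0\<^sub>v n}"
proof -
  define m where "m = length zs"
  have d0: "d > 0" using d_ge by simp
  have dnz: "(of_nat d :: 'p FF) \<noteq> 0"
    using p_ndvd by (simp add: of_nat_eq_0_iff_char_dvd)
  obtain z0 :: "'p FF" where z0: "ordx z0 d" using exists_prim_root[OF d0 dnz] by blast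
  have z0d: "z0 ^ d = 1" using ordx_pow_one[OF z0] .
  have prim: "prim_root_unity d w \<longleftrightarrow> ordx w d" for w :: "'p FF" using prim_iff_ordx[OF d0] .
  have roots: "{w::'p FF. w ^ d = 1} = (\<lambda>j. z0 ^ j) ` {..<d}" using roots_eq[OF z0 d0] .
  have inj0: "inj_on (\<lambda>j. z0 ^ j) {..<d}" using ordx_inj[OF z0 d0] .
  have setzs: "set zs = (\<lambda>j. z0 ^ j) ` {j. j < d \<and> coprime j d}"
  proof -
    have "set zs = {w. ordx w d}" using zs_set prim by auto
    also have "\<dots> = (\<lambda>j. z0 ^ j) ` {j. j < d \<and> coprime j d}"
    proof safe
      fix w :: "'p FF" assume "ordx w d"
      hence "w \<in> {w. w ^ d = 1}" using ordx_pow_one by auto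
      then obtain j where j: "j < d" "w = z0 ^ j" using roots by auto
      hence "coprime j d" using ordx_pow_iff[OF z0 d0] \<open>ordx w d\<close> by simp
      thus "w \<in> (\<lambda>j. z0 ^ j) ` {j. j < d \<and> coprime j d}" using j by auto
    next
      fix j assume "j < d" "coprime j d"
      thus "ordx (z0 ^ j) d" using ordx_pow_iff[OF z0 d0] by simp
    qed
    finally show ?thesis .
  qed
  have m_tot: "m = totient d"
  proof -
    have "m = card (set zs)" unfolding m_def using distinct_card[OF zs_distinct] by simp
    also have "\<dots> = card {j. j < d \<and> coprime j d}" unfolding setzs
      by (rule card_image) (rule inj_on_subset[OF inj0], auto)
    also have "{j. j < d \<and> coprime j d} = totatives d"
    proof safe
      fix j assume "j < d" "coprime j d"
      moreover have "j \<noteq> 0"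
      proof
        assume "j = 0" thus False using \<open>coprime j d\<close> d_ge by simp
      qed
      ultimately show "j \<in> totatives d" by (auto simp: totatives_def)
    next
      fix j assume "j \<in> totatives d"
      thus "coprime j d" by (auto simp: totatives_def)
      have "j \<noteq> d" using \<open>j \<in> totatives d\<close> d_ge by (auto simp: totatives_def)
      thus "j < d" using \<open>j \<in> totatives d\<close> by (auto simp: totatives_def)
    qed
    finally show ?thesis by (simp add: totient_def)
  qed
  have zs_ord: "ordx (zs ! c) d" if "c < m" for c
    using that zs_set prim unfolding m_def by (metis mem_Collect_eq nth_mem)
  have zs_root: "(zs ! c) ^ d = 1" if "c < m" for c using ordx_pow_one[OF zs_ord[OF that]] .
  have getrow: "\<exists>c<m. zs ! c = z0 ^ b" if "b < d" "coprime b d" for b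
  proof -
    have "z0 ^ b \<in> set zs" unfolding setzs using that by auto
    thus ?thesis unfolding m_def by (metis in_set_conv_nth)
  qed
  have m0: "m > 0" using getrow[of 1] d_ge by auto
  have Cc: "C \<in> carrier_mat m d" unfolding C_def m_def by simp
  have Cij: "C $$ (c, h) = (zs ! c) ^ h" if "c < m" "h < d" for c h
    unfolding C_def using that m_def by simp
  have Cmv: "(C *\<^sub>v x) $ c = (\<Sum>h<d. (zs ! c) ^ h * x $ h)" if "c < m" "x \<in> carrier_vec d" for c x
    using that Cc Cij by (auto simp: mult_mat_vec_def scalar_prod_def atLeast0LessThan intro!: sum.cong)
  have eqidx: "zs ! c' * (zs ! c) ^ (d - 1) = 1 \<longleftrightarrow> c' = c" if "c < m" "c' < m" for c c'
    using root_inv(2)[OF zs_root[OF that(1)] d0, of "zs ! c'"] nth_eq_iff_index_eq[OF zs_distinct] that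
    unfolding m_def by auto
  have rank: "vec_space.rank m C = m"
  proof -
    interpret V: vec_space "TYPE('p FF)" m .
    have dist: "distinct (cols C)"
      unfolding distinct_conv_nth
    proof (intro allI impI)
      fix i j assume ij: "i < length (cols C)" "j < length (cols C)" "i \<noteq> j"
      hence ij': "i < d" "j < d" using Cc by auto
      show "cols C ! i \<noteq> cols C ! j"
      proof
        assume "cols C ! i = cols C ! j"
        hence "col C i $ 0 = col C j $ 0" using ij' Cc by simp
        hence "(zs ! 0) ^ i = (zs ! 0) ^ j" using ij' Cc Cij m0 by simp
        thus False using ordx_inj[OF zs_ord[OF m0] d0] ij' ij(3) by (auto dest: inj_onD)
      qed
    qed
    have surj: "y \<in> V.span (set (cols C))" if y: "y \<in> carrier_vec m" for y
    proof -
      define x where "x = vec d (\<lambda>h. inverse (of_nat d) * (\<Sum>c<m. y $ c * ((zs ! c) ^ (d - 1)) ^ h))"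
      have xc: "x \<in> carrier_vec d" unfolding x_def by simp
      have "C *\<^sub>v x = y"
      proof (rule eq_vecI)
        show "dim_vec (C *\<^sub>v x) = dim_vec y" using Cc y by simp
        fix c' assume "c' < dim_vec y"
        hence c': "c' < m" using y by simp
        have "(C *\<^sub>v x) $ c' = (\<Sum>h<d. (zs ! c') ^ h * (inverse (of_nat d) * (\<Sum>c<m. y $ c * ((zs ! c) ^ (d - 1)) ^ h)))"
          using Cmv[OF c' xc] unfolding x_def by simp
        also have "\<dots> = inverse (of_nat d) * (\<Sum>c<m. y $ c * (\<Sum>h<d. (zs ! c' * (zs ! c) ^ (d - 1)) ^ h))"
          by (simp add: sum_distrib_left sum_distrib_right power_mult_distrib ac_simps sum.swap[of _ "{..<d}"])
        also have "\<dots> = inverse (of_nat d) * (\<Sum>c<m. y $ c * (if c = c' then of_nat d else 0))"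
        proof -
          have "(\<Sum>h<d. (zs ! c' * (zs ! c) ^ (d - 1)) ^ h) = (if c = c' then of_nat d else 0)" if "c < m" for c
          proof -
            have "(zs ! c' * (zs ! c) ^ (d - 1)) ^ d = (zs ! c') ^ d * ((zs ! c) ^ d) ^ (d - 1)"
              by (simp add: power_mult_distrib power_mult[symmetric] mult.commute)
            hence w: "(zs ! c' * (zs ! c) ^ (d - 1)) ^ d = 1" using zs_root c' that by simp
            show ?thesis using orth[OF w] eqidx[OF that c'] by auto
          qed
          thus ?thesis by (intro arg_cong[where f="\<lambda>t. inverse (of_nat d) * t"] sum.cong) auto
        qed
        also have "\<dots> = y $ c'" using c' dnz by (simp add: if_distrib sum.delta cong: if_cong)
        finally show "(C *\<^sub>v x) $ c' = y $ c'" .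
      qed
      hence "y = V.lincomb (\<lambda>a. x $ find_first a (cols C)) (set (cols C))"
        using V.lincomb_eq_mat_mult[OF Cc xc dist] by simp
      thus ?thesis unfolding V.span_def by force
    qed
    have colsc: "set (cols C) \<subseteq> carrier_vec m" using Cc cols_dim by blast
    have "V.span (set (cols C)) = carrier_vec m"
      using V.span_is_subset2[OF colsc] surj by auto
    hence "V.span_vs (set (cols C)) = V.V" by simp
    thus ?thesis unfolding V.rank_def using V.dim_is_n by simp
  qed
  have Ec: "E \<in> carrier_mat d n" unfolding E_def by simp
  have Bc: "B \<in> carrier_mat m n" unfolding B_def using Cc Ec by simp
  have ker3: "mat_kernel B = {0\<^sub>v n}"
  proof
    have "B *\<^sub>v 0\<^sub>v n = 0\<^sub>v m" using Bc by auto
    thus "{0\<^sub>v n} \<subseteq> mat_kernel B" using mat_kernelI[OF Bc, of "0\<^sub>v n"] by auto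
    show "mat_kernel B \<subseteq> {0\<^sub>v n}"
    proof
      fix x assume xk: "x \<in> mat_kernel B"
      have xc: "x \<in> carrier_vec n" and Bx: "B *\<^sub>v x = 0\<^sub>v m" using mat_kernelD[OF Bc xk] by auto
      have Exc: "E *\<^sub>v x \<in> carrier_vec d" using Ec xc by simp
      have Ex: "(E *\<^sub>v x) $ h = (\<Sum>i<n. red (\<chi> i h) * x $ i)" if "h < d" for h
        using that Ec xc unfolding E_def by (auto simp: mult_mat_vec_def scalar_prod_def atLeast0LessThan intro!: sum.cong)
      have BCE: "B *\<^sub>v x = C *\<^sub>v (E *\<^sub>v x)" unfolding B_def using assoc_mult_mat_vec[OF Cc Ec xc] .
      define g where "g i = (\<Sum>h<d. red (\<chi> i h) * z0 ^ h)" for i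
      have row0: "(\<Sum>i<n. x $ i * (\<Sum>h<d. red (\<chi> i h) * (zs ! c) ^ h)) = 0" if c: "c < m" for c
      proof -
        have "0 = (B *\<^sub>v x) $ c" using Bx c by simp
        also have "\<dots> = (\<Sum>h<d. (zs ! c) ^ h * (\<Sum>i<n. red (\<chi> i h) * x $ i))"
          unfolding BCE using Cmv[OF c Exc] Ex by simp
        also have "\<dots> = (\<Sum>i<n. x $ i * (\<Sum>h<d. red (\<chi> i h) * (zs ! c) ^ h))"
          by (simp add: sum_distrib_left sum_distrib_right ac_simps sum.swap[of _ "{..<d}"])
        finally show ?thesis by simp
      qed
      have rowu: "(\<Sum>i<n. (x $ i * g i) * red (\<chi> i u)) = 0" if u: "coprime u d" for u
      proof -
        obtain b0 where "[u * b0 = Suc 0] (mod d)" using cong_solve_coprime_nat[OF u] by blast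
        hence ub: "[u * (b0 mod d) = 1] (mod d)" by (simp add: cong_def mod_mult_right_eq)
        have bd: "b0 mod d < d" using d0 by simp
        have bc: "coprime (b0 mod d) d" using ub
          by (metis cong_imp_coprime cong_sym coprime_1_left coprime_mult_left_iff mult.commute)
        obtain c where c: "c < m" "zs ! c = z0 ^ (b0 mod d)" using getrow[OF bd bc] by blast
        have "\<forall>i<n. (\<Sum>h<d. red (\<chi> i h) * (zs ! c) ^ h) = red (\<chi> i u) * g i"
        proof (intro allI impI)
          fix i assume i: "i < n"
          have "(\<Sum>h<d. red (\<chi> i h) * (zs ! c) ^ h) = (\<Sum>h<d. red (\<chi> i h) * z0 ^ ((b0 mod d) * h))"
            using c by (simp add: power_mult)
          also have "\<dots> = red (\<chi> i u) * g i" unfolding g_def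
            by (rule gauss_cop[OF chars[OF i] d0 ub z0d red_mult])
          finally show "(\<Sum>h<d. red (\<chi> i h) * (zs ! c) ^ h) = red (\<chi> i u) * g i" .
        qed
        hence "(\<Sum>i<n. x $ i * (\<Sum>h<d. red (\<chi> i h) * (zs ! c) ^ h)) = (\<Sum>i<n. (x $ i * g i) * red (\<chi> i u))"
          by (intro sum.cong) (auto simp: ac_simps)
        thus ?thesis using row0[OF c(1)] by simp
      qed
      have all0: "\<forall>i\<in>{..<n}. x $ i * g i = 0"
      proof (rule char_indep[where P = "\<lambda>u. coprime u d" and \<psi> = "\<lambda>i u. red (\<chi> i u)"])
        show "\<forall>u. coprime u d \<longrightarrow> (\<Sum>i\<in>{..<n}. x $ i * g i * red (\<chi> i u)) = 0" using rowu by auto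
      next
        fix i x y assume "i \<in> {..<n}" thus "red (\<chi> i (x * y)) = red (\<chi> i x) * red (\<chi> i y)"
          using char_mult[OF chars] red_mult by simp
      next
        fix i assume "i \<in> {..<n}" thus "red (\<chi> i 1) = 1" using char_one[OF chars] red_1 by simp
      next
        fix i j assume "i \<in> {..<n}" "j \<in> {..<n}" "i \<noteq> j"
        thus "\<exists>a. coprime a d \<and> red (\<chi> i a) \<noteq> red (\<chi> j a)" using distinct_mod[of i j] by auto
      qed auto
      have "x = 0\<^sub>v n"
      proof (rule eq_vecI)
        fix i assume "i < dim_vec (0\<^sub>v n)"
        hence i: "i < n" by simp
        have "g i \<noteq> 0" unfolding g_def
          by (rule gauss_nonzero[OF chars[OF i] cond[OF i] d_ge z0 dnz red_1 red_add red_mult])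
        thus "x $ i = 0\<^sub>v n $ i" using all0 i by force
      qed (use xc in simp)
      thus "x \<in> {0\<^sub>v n}" by simp
    qed
  qed
  define Z where "Z = {z::'p FF. z ^ d = 1 \<and> \<not> prim_root_unity d z}"
  define P where "P = {z::'p FF. z ^ d = 1 \<and> prim_root_unity d z}"
  define vv where "vv = (\<lambda>z::'p FF. vec d (\<lambda>h. z ^ h))"
  define N where "N = {vec d (\<lambda>h. z ^ h) | z::'p FF. z ^ d = 1 \<and> \<not> prim_root_unity d z}"
  have N_eq: "N = vv ` Z" unfolding N_def vv_def Z_def by auto
  have vv1: "vv z $ 1 = z" for z unfolding vv_def using d_ge by simp
  have vvh: "vv z $ h = z ^ h" if "h < d" for z h unfolding vv_def using that by simp
  have vvc: "vv z \<in> carrier_vec d" for z unfolding vv_def by simp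
  have vinj: "inj vv" by (rule injI) (metis vv1)
  have finR: "finite {w::'p FF. w ^ d = 1}" unfolding roots by simp
  have finZ: "finite Z" using finR unfolding Z_def by (auto intro: finite_subset)
  have finN: "finite N" unfolding N_eq using finZ by simp
  have NC: "N \<subseteq> carrier_vec d" unfolding N_eq using vvc by auto
  have NK: "N \<subseteq> mat_kernel C"
  proof
    fix v assume "v \<in> N"
    then obtain z where z: "z \<in> Z" "v = vv z" unfolding N_eq by auto
    have "C *\<^sub>v v = 0\<^sub>v m"
    proof (rule eq_vecI)
      fix c assume "c < dim_vec (0\<^sub>v m)"
      hence c: "c < m" by simp
      have "(C *\<^sub>v v) $ c = (\<Sum>h<d. (zs ! c * z) ^ h)"
        using Cmv[OF c vvc[of z]] z vvh by (simp add: power_mult_distrib)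
      also have "\<dots> = 0"
      proof -
        have w: "(zs ! c * z) ^ d = 1" using zs_root[OF c] z(1) unfolding Z_def by (simp add: power_mult_distrib)
        have "zs ! c * z \<noteq> 1"
        proof
          assume "zs ! c * z = 1"
          hence "ordx z d" using ordx_inverse[OF _ zs_ord[OF c]] by (simp add: mult.commute)
          thus False using z(1) prim unfolding Z_def by auto
        qed
        thus ?thesis using orth[OF w] by simp
      qed
      finally show "(C *\<^sub>v v) $ c = 0\<^sub>v m $ c" using c by simp
    qed (use Cc in simp)
    thus "v \<in> mat_kernel C" using mat_kernelI[OF Cc] z vvc by auto
  qed
  interpret K: kernel m d C using Cc by unfold_locales
  have LI: "\<not> K.NC.lin_dep N"
  proof
    assume "K.NC.lin_dep N"
    then obtain A a v where A: "finite A" "A \<subseteq> N" "K.NC.lincomb a A = 0\<^sub>v d" "v \<in> A" "a v \<noteq> 0"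
      unfolding K.NC.lin_dep_def by auto
    have AC: "A \<subseteq> carrier_vec d" using A(2) NC by auto
    obtain w where w: "w \<in> Z" "v = vv w" using A(2,4) unfolding N_eq by auto
    have wd: "w ^ d = 1" using w unfolding Z_def by simp
    have comp: "(\<Sum>x\<in>A. a x * x $ h) = 0" if "h < d" for h
      using K.NC.lincomb_index[OF that AC, of a] A(3) that by simp
    have "0 = (\<Sum>h<d. (\<Sum>x\<in>A. a x * x $ h) * (w ^ (d - 1)) ^ h)" using comp by simp
    also have "\<dots> = (\<Sum>x\<in>A. a x * (\<Sum>h<d. x $ h * (w ^ (d - 1)) ^ h))"
      by (simp add: sum_distrib_left sum_distrib_right ac_simps sum.swap[of _ "{..<d}"])
    also have "\<dots> = (\<Sum>x\<in>A. if x = v then a v * of_nat d else 0)"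
    proof (rule sum.cong[OF refl])
      fix x assume xA: "x \<in> A"
      then obtain z where z: "z \<in> Z" "x = vv z" using A(2) unfolding N_eq by auto
      have zd: "z ^ d = 1" using z unfolding Z_def by simp
      have "(\<Sum>h<d. x $ h * (w ^ (d - 1)) ^ h) = (\<Sum>h<d. (z * w ^ (d - 1)) ^ h)"
        using z vvh by (simp add: power_mult_distrib)
      also have "(z * w ^ (d - 1)) ^ d = z ^ d * (w ^ d) ^ (d - 1)"
        by (simp add: power_mult_distrib power_mult[symmetric] mult.commute)
      hence zw1: "(z * w ^ (d - 1)) ^ d = 1" using zd wd by simp
      have "(\<Sum>h<d. (z * w ^ (d - 1)) ^ h) = (if z = w then of_nat d else 0)"
        using orth[OF zw1] root_inv(2)[OF wd d0, of z] by simp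
      also have "(z = w) \<longleftrightarrow> (x = v)" using z w vinj by (auto dest: injD)
      finally show "a x * (\<Sum>h<d. x $ h * (w ^ (d - 1)) ^ h) = (if x = v then a v * of_nat d else 0)"
        by auto
    qed
    also have "\<dots> = a v * of_nat d" using A(1,4) by (simp add: sum.delta)
    finally show False using A(5) dnz by simp
  qed
  have SP: "mat_kernel C \<subseteq> K.NC.span N"
  proof
    fix x assume xk: "x \<in> mat_kernel C"
    have xc: "x \<in> carrier_vec d" and Cx: "C *\<^sub>v x = 0\<^sub>v m" using mat_kernelD[OF Cc xk] by auto
    define f where "f h z = inverse (of_nat d) * (\<Sum>k<d. x $ k * (z ^ (d - 1)) ^ k) * z ^ h" for h z
    define a where "a v = inverse (of_nat d) * (\<Sum>k<d. x $ k * ((v $ 1) ^ (d - 1)) ^ k)" for v :: "'p FF vec"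
    have "K.NC.lincomb a N = x"
    proof (rule eq_vecI)
      show "dim_vec (K.NC.lincomb a N) = dim_vec x" using xc K.NC.lincomb_closed[OF NC] by auto
      fix h assume "h < dim_vec x"
      hence h: "h < d" using xc by simp
      have "K.NC.lincomb a N $ h = (\<Sum>v\<in>N. a v * v $ h)" using K.NC.lincomb_index[OF h NC] .
      also have "\<dots> = (\<Sum>z\<in>Z. a (vv z) * vv z $ h)" unfolding N_eq
        using sum.reindex[OF inj_on_subset[OF vinj, of Z], of "\<lambda>v. a v * v $ h"] by simp
      also have "\<dots> = (\<Sum>z\<in>Z. f h z)" unfolding a_def f_def using vv1 by (simp add: vvh[OF h] One_nat_def)
      also have "\<dots> = x $ h"
      proof -
        have RZP: "{w::'p FF. w ^ d = 1} = Z \<union> P" "Z \<inter> P = {}" unfolding Z_def P_def by auto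
        have finP: "finite P" using finR unfolding P_def by (auto intro: finite_subset)
        have sumR: "(\<Sum>z\<in>{w::'p FF. w ^ d = 1}. f h z) = (\<Sum>z\<in>Z. f h z) + (\<Sum>z\<in>P. f h z)"
          unfolding RZP(1) by (rule sum.union_disjoint[OF finZ finP RZP(2)])
        have sumP: "(\<Sum>z\<in>P. f h z) = 0"
        proof (rule sum.neutral, rule ballI)
          fix z assume "z \<in> P"
          hence zo: "ordx z d" and zd: "z ^ d = 1" using prim unfolding P_def by auto
          have "ordx (z ^ (d - 1)) d"
            using ordx_inverse[OF _ zo] root_inv(1)[OF zd d0] by (simp add: mult.commute)
          hence "z ^ (d - 1) \<in> set zs" using zs_set prim by auto
          then obtain c where c: "c < m" "zs ! c = z ^ (d - 1)" unfolding m_def by (metis in_set_conv_nth)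
          have "(\<Sum>k<d. x $ k * (z ^ (d - 1)) ^ k) = (C *\<^sub>v x) $ c"
            using Cmv[OF c(1) xc] c(2) by (simp add: ac_simps)
          also have "\<dots> = 0" using Cx c by simp
          finally show "f h z = 0" unfolding f_def by simp
        qed
        have sumR2: "(\<Sum>z\<in>{w::'p FF. w ^ d = 1}. f h z) = x $ h"
        proof -
          have "(\<Sum>z\<in>{w::'p FF. w ^ d = 1}. f h z) = (\<Sum>j<d. f h (z0 ^ j))"
            unfolding roots using sum.reindex[OF inj0, of "f h"] by (simp add: comp_def)
          also have "\<dots> = (\<Sum>j<d. inverse (of_nat d) * (\<Sum>k<d. x $ k * (z0 ^ h * (z0 ^ k) ^ (d - 1)) ^ j))"
          proof (rule sum.cong[OF refl])
            fix j assume j: "j \<in> {..<d}"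
            have pe: "((z0 ^ j) ^ (d - 1)) ^ k * (z0 ^ j) ^ h = (z0 ^ h * (z0 ^ k) ^ (d - 1)) ^ j" for k
            proof -
              have "((z0 ^ j) ^ (d - 1)) ^ k * (z0 ^ j) ^ h = z0 ^ (j * (d - 1) * k + j * h)"
                by (simp only: power_mult[symmetric] power_add)
              also have "j * (d - 1) * k + j * h = h * j + k * (d - 1) * j" by (simp add: algebra_simps)
              also have "z0 ^ \<dots> = (z0 ^ h * (z0 ^ k) ^ (d - 1)) ^ j"
                by (simp only: power_mult[symmetric] power_add power_mult_distrib)
              finally show ?thesis .
            qed
            show "f h (z0 ^ j) = inverse (of_nat d) * (\<Sum>k<d. x $ k * (z0 ^ h * (z0 ^ k) ^ (d - 1)) ^ j)"
              unfolding f_def by (simp only: sum_distrib_right mult.assoc pe)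
          qed
          also have "\<dots> = inverse (of_nat d) * (\<Sum>j<d. \<Sum>k<d. x $ k * (z0 ^ h * (z0 ^ k) ^ (d - 1)) ^ j)"
            by (simp only: sum_distrib_left)
          also have "\<dots> = inverse (of_nat d) * (\<Sum>k<d. \<Sum>j<d. x $ k * (z0 ^ h * (z0 ^ k) ^ (d - 1)) ^ j)"
            by (subst sum.swap) (rule refl)
          also have "\<dots> = inverse (of_nat d) * (\<Sum>k<d. x $ k * (\<Sum>j<d. (z0 ^ h * (z0 ^ k) ^ (d - 1)) ^ j))"
            by (simp only: sum_distrib_left)
          also have "\<dots> = inverse (of_nat d) * (\<Sum>k<d. x $ k * (if k = h then of_nat d else 0))"
          proof -
            have "(\<Sum>j<d. (z0 ^ h * (z0 ^ k) ^ (d - 1)) ^ j) = (if k = h then of_nat d else 0)" if k: "k < d" for k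
            proof -
              have "(z0 ^ k) ^ d = (z0 ^ d) ^ k" "(z0 ^ h) ^ d = (z0 ^ d) ^ h"
                by (simp_all only: power_mult[symmetric] mult.commute)
              hence zk: "(z0 ^ k) ^ d = 1" "(z0 ^ h) ^ d = 1" using z0d by simp_all
              have "((z0 ^ k) ^ (d - 1)) ^ d = ((z0 ^ k) ^ d) ^ (d - 1)"
                by (simp only: power_mult[symmetric] mult_ac)
              hence "(z0 ^ h * (z0 ^ k) ^ (d - 1)) ^ d = (z0 ^ h) ^ d * ((z0 ^ k) ^ d) ^ (d - 1)"
                by (simp only: power_mult_distrib)
              hence wd: "(z0 ^ h * (z0 ^ k) ^ (d - 1)) ^ d = 1" using zk by simp
              have "z0 ^ h * (z0 ^ k) ^ (d - 1) = 1 \<longleftrightarrow> z0 ^ h = z0 ^ k" using root_inv(2)[OF zk(1) d0] .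
              also have "\<dots> \<longleftrightarrow> k = h" using inj0 h k by (auto dest: inj_onD)
              finally show ?thesis using orth[OF wd] by simp
            qed
            thus ?thesis by (intro arg_cong[where f="\<lambda>t. inverse (of_nat d) * t"] sum.cong) auto
          qed
          also have "\<dots> = x $ h" using h dnz by (simp add: if_distrib sum.delta cong: if_cong)
          finally show ?thesis .
        qed
        show ?thesis using sumR sumP sumR2 by simp
      qed
      finally show "K.NC.lincomb a N $ h = x $ h" .
    qed
    thus "x \<in> K.NC.span N" unfolding K.NC.span_def using finN by auto
  qed
  have li: "\<not> K.Ker.lin_dep N" using LI K.lindep_same[OF NK] by simp
  have s1: "K.Ker.span N \<subseteq> mat_kernel C" using K.Ker.span_is_subset2[OF NK] by simp
  have s2: "mat_kernel C \<subseteq> K.Ker.span N" using SP K.span_same[OF NK] by simp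
  have basis: "K.Ker.basis N"
    unfolding K.Ker.basis_def using li s1 s2 NK by auto
  show ?thesis using rank m_tot basis ker3 unfolding m_def N_def by simp
qed

end
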